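(* Let $\sigma^2>0$, $\mu\in\mathbb{C}$, $\zeta=|\mu|^2$, and let $y_1,y_2,\dots$ be i.i.d. random variables with $y_s=|X_s|^2$, where $X_s\sim\mathcal{CN}(\mu,\sigma^2)$ (a circularly-symmetric complex Gaussian with mean $\mu$ and variance $\sigma^2$). Set $f=\mathbb{E}[y_s]=\zeta+\sigma^2$ and $\nu^2=\sigma^4+2\sigma^2\zeta$ (the variance of $y_s$). For $n\geq 1$ let $\hat f_n=\frac1n\sum_{s=1}^n y_s$. Then for every $n\ge 1$ and every $0<\delta\le \nu^2/\sigma^2$, $$\mathbb{P}\big(|\hat f_n-f|>\delta\big)\le 2\exp\!\Big(-\frac{n\delta^2}{4\nu^2}\Big).$$
   Context: In the paper, $y_s$ is the received signal strength $|\mathbf{w}_{h,i}^H\mathbf{z}|^2$ obtained when sampling beamforming vector $\mathbf{w}_{h,i}$, $\zeta=\zeta_{h,i}=|\mathbf{w}_{h,i}^H\mathbf{h}|^2$, $f=f(\mathcal{P}_{h,i})$, and $n=N_{h,i}(t_h)$ is the number of samples of that arm. *)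

theory Defs
  imports "HOL-Probability.Probability"
begin

definition cn_density :: "complex \<Rightarrow> real \<Rightarrow> complex \<Rightarrow> real" where
  "cn_density mu s2 z = exp (- ((cmod (z - mu))^2 / s2)) / (pi * s2)"

end

theory Submission
  imports Defs
begin

lemma ln_lower:
  fixes u :: real assumes "\<bar>u\<bar> \<le> 1/2"
  shows "- u - u^2 \<le> ln (1 - u)"
proof (cases "u \<le> 0")
  case True
  have "(-u) - (-u)\<^sup>2 \<le> ln (1 + (-u))"
    by (rule ln_one_plus_pos_lower_bound) (use True assms in auto)
  then show ?thesis by simp
next
  case False
  define h where "h x = ln (1 - x) + x + x^2" for x :: real
  have "h 0 \<le> h u"
  proof (rule DERIV_nonneg_imp_nondecreasing[of 0 u h])
    show "0 \<le> u" using False by simp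
  next
    fix x assume "0 \<le> x" "x \<le> u"
    then have x: "0 \<le> x \<and> x \<le> u" by simp
    then have x1: "x < 1" using assms by auto
    have "(h has_real_derivative (- 1 / (1 - x) + 1 + 2 * x)) (at x)"
      unfolding h_def using x1
      by (auto intro!: derivative_eq_intros simp: field_simps)
    moreover have "- 1 / (1 - x) + 1 + 2 * x \<ge> 0"
    proof -
      have "- 1 / (1 - x) + 1 + 2 * x = x * (1 - 2*x) / (1 - x)"
        using x1 by (simp add: field_simps)
      also have "\<dots> \<ge> 0" using x x1 assms by (intro divide_nonneg_pos mult_nonneg_nonneg) auto
      finally show ?thesis .
    qed
    ultimately show "\<exists>y. (h has_real_derivative y) (at x) \<and> 0 \<le> y" by blast
  qed
  then show ?thesis by (simp add: h_def)
qed

lemma mgf_real_bound: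
  fixes t s2 z :: real
  assumes "s2 > 0" "z \<ge> 0" "\<bar>t * s2\<bar> \<le> 1/2"
  shows "exp (t * z / (1 - t * s2) - t * (z + s2)) / (1 - t * s2) \<le> exp ((s2^2 + 2 * s2*z) * t^2)"
proof -
  define u where "u = t * s2"
  have c: "1 - u \<ge> 1/2" using assms by (auto simp: u_def)
  have l: "- u - u^2 \<le> ln (1 - u)" using ln_lower assms by (simp add: u_def)
  have e1: "t * z / (1 - u) - t * z = z * t^2 * s2 / (1 - u)"
    using c by (simp add: field_simps u_def power2_eq_square)
  have e2: "z * t^2 * s2 / (1 - u) \<le> 2 * s2 * z * t^2"
  proof -
    have "z * t^2 * s2 / (1 - u) = (z * t^2 * s2) * (1 / (1 - u))" by simp
    also have "\<dots> \<le> (z * t^2 * s2) * 2"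
      using c assms by (intro mult_left_mono) (auto simp: field_simps)
    finally show ?thesis by (simp add: mult_ac)
  qed
  have "exp (t * z / (1 - u) - t * (z + s2)) / (1 - u)
        = exp (t * z / (1 - u) - t * (z + s2) - ln (1 - u))"
    using c by (simp add: exp_diff)
  also have "\<dots> \<le> exp ((s2^2 + 2 * s2*z) * t^2)"
  proof -
    have "t * z / (1 - u) - t * (z + s2) - ln (1 - u) \<le> 2 * s2 * z * t^2 - u + u + u^2"
      using e1 e2 l by (simp add: u_def algebra_simps)
    also have "\<dots> = (s2^2 + 2 * s2*z) * t^2" by (simp add: u_def algebra_simps power2_eq_square)
    finally show ?thesis by simp
  qed
  finally show ?thesis by (simp add: u_def)
qed

lemma nn_integral_complex_affine:
  fixes f :: "complex \<Rightarrow> ennreal" and a :: real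
  assumes [measurable]: "f \<in> borel_measurable borel" and a: "a > 0"
  shows "(\<integral>\<^sup>+z. f z \<partial>lborel) = ennreal (a^2) * (\<integral>\<^sup>+z. f (b + a *\<^sub>R z) \<partial>lborel)"
  apply (subst lborel_affine[of a b])
  using a by (simp_all add: nn_integral_density nn_integral_distr nn_integral_cmult)

lemma cn_density_integral_eq:
  assumes "v > 0"
  shows "(\<integral>\<^sup>+z. ennreal (cn_density m v z) \<partial>lborel) = (\<integral>\<^sup>+z. ennreal (cn_density 0 1 z) \<partial>lborel)"
proof -
  have "(\<integral>\<^sup>+z. ennreal (cn_density m v z) \<partial>lborel)
     = ennreal ((sqrt v)^2) * (\<integral>\<^sup>+z. ennreal (cn_density m v (m + sqrt v *\<^sub>R z)) \<partial>lborel)"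
    using assms by (intro nn_integral_complex_affine) (auto simp: cn_density_def)
  also have "\<dots> = (\<integral>\<^sup>+z. ennreal v * ennreal (cn_density m v (m + sqrt v *\<^sub>R z)) \<partial>lborel)"
    using assms by (subst nn_integral_cmult) (auto simp: cn_density_def)
  also have "\<dots> = (\<integral>\<^sup>+z. ennreal (cn_density 0 1 z) \<partial>lborel)"
  proof (intro nn_integral_cong)
    fix z :: complex
    have "cmod (sqrt v *\<^sub>R z) ^ 2 = v * cmod z ^ 2"
      using assms by (simp add: power_mult_distrib)
    then show "ennreal v * ennreal (cn_density m v (m + sqrt v *\<^sub>R z)) = ennreal (cn_density 0 1 z)"
      using assms by (simp add: cn_density_def flip: ennreal_mult)
  qed
  finally show ?thesis .
qed

lemma cn_mgf:
  assumes s2: "s2 > 0" and c: "1 - t * s2 > 0"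
    and one: "(\<integral>\<^sup>+z. ennreal (cn_density 0 1 z) \<partial>lborel) = 1"
  shows "(\<integral>\<^sup>+z. ennreal (cn_density mu s2 z) * ennreal (exp (t * ((cmod z)^2 - a))) \<partial>lborel)
       = ennreal (exp (t * (cmod mu)^2 / (1 - t * s2) - t * a) / (1 - t * s2))"
proof -
  define c where "c = 1 - t * s2"
  have c0: "c > 0" using c by (simp add: c_def)
  define K where "K = exp (t * (cmod mu)^2 / c - t * a) / c"
  have K0: "K \<ge> 0" using c0 by (simp add: K_def)
  have pt: "cn_density mu s2 z * exp (t * ((cmod z)^2 - a)) = K * cn_density (mu / of_real c) (s2 / c) z" for z
  proof -
    have key: "-((cmod (z - mu))^2 / s2) + t * ((cmod z)^2 - a)
        = (t * (cmod mu)^2 / c - t * a) + (- ((cmod (z - mu / of_real c))^2 / (s2 / c)))"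
    proof -
      have e: "(cmod (z - mu / of_real c))^2 = (Re z - Re mu / c)^2 + (Im z - Im mu / c)^2"
        "(cmod (z - mu))^2 = (Re z - Re mu)^2 + (Im z - Im mu)^2"
        "(cmod z)^2 = Re z ^2 + Im z ^2" "(cmod mu)^2 = Re mu ^2 + Im mu ^2"
        by (simp_all add: cmod_power2)
      show ?thesis unfolding e using c0 s2
        by (simp add: field_simps) (simp add: c_def power2_eq_square algebra_simps)
    qed
    have "cn_density mu s2 z * exp (t * ((cmod z)^2 - a))
        = exp (-((cmod (z - mu))^2 / s2) + t * ((cmod z)^2 - a)) / (pi * s2)"
      by (simp add: cn_density_def exp_add[symmetric])
    also have "\<dots> = K * cn_density (mu / of_real c) (s2 / c) z"
    proof -
      have g: "exp (A + B) / (pi * s2) = (exp A / c) * (exp B / (pi * (s2 / c)))" for A B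
        using c0 s2 by (simp add: exp_add field_simps)
      show ?thesis unfolding key g unfolding cn_density_def K_def ..
    qed
    finally show ?thesis .
  qed
  have "(\<integral>\<^sup>+z. ennreal (cn_density mu s2 z) * ennreal (exp (t * ((cmod z)^2 - a))) \<partial>lborel)
     = (\<integral>\<^sup>+z. ennreal K * ennreal (cn_density (mu / of_real c) (s2 / c) z) \<partial>lborel)"
  proof (intro nn_integral_cong)
    fix x :: complex
    have nn: "cn_density m v x \<ge> 0" if "v > 0" for m v
      using that by (simp add: cn_density_def)
    have "ennreal (cn_density mu s2 x) * ennreal (exp (t * ((cmod x)^2 - a)))
        = ennreal (cn_density mu s2 x * exp (t * ((cmod x)^2 - a)))"
      by (rule ennreal_mult[symmetric]) (use nn s2 in auto)
    also have "\<dots> = ennreal (K * cn_density (mu / of_real c) (s2 / c) x)" by (simp only: pt)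
    also have "\<dots> = ennreal K * ennreal (cn_density (mu / of_real c) (s2 / c) x)"
      by (rule ennreal_mult) (use nn s2 c0 K0 in auto)
    finally show "ennreal (cn_density mu s2 x) * ennreal (exp (t * ((cmod x)^2 - a)))
        = ennreal K * ennreal (cn_density (mu / of_real c) (s2 / c) x)" .
  qed
  also have "\<dots> = ennreal K * (\<integral>\<^sup>+z. ennreal (cn_density (mu / of_real c) (s2 / c) z) \<partial>lborel)"
    by (subst nn_integral_cmult) (auto simp: cn_density_def)
  also have "\<dots> = ennreal K"
    using cn_density_integral_eq[of "s2 / c" "mu / of_real c"] c0 s2 one by simp
  finally show ?thesis by (simp add: K_def c_def)
qed

theorem lemma1:
  fixes M :: "'a measure" and X :: "nat \<Rightarrow> 'a \<Rightarrow> complex"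
    and mu :: complex and s2 :: real and n :: nat and \<delta> :: real
  assumes "prob_space M"
    and "s2 > 0"
    and "prob_space.indep_vars M (\<lambda>_. borel) X UNIV"
    and "\<And>s. distributed M lborel (X s) (\<lambda>z. ennreal (cn_density mu s2 z))"
    and "n \<ge> 1"
    and "0 < \<delta>"
    and "\<delta> \<le> (s2^2 + 2 * s2 * (cmod mu)^2) / s2"
  shows "measure M {\<omega> \<in> space M.
            \<bar>(\<Sum>s\<in>{1..n}. (cmod (X s \<omega>))^2) / real n - ((cmod mu)^2 + s2)\<bar> > \<delta>}
         \<le> 2 * exp (- ((real n * \<delta>^2) / (4 * (s2^2 + 2 * s2 * (cmod mu)^2))))"
proof -
  interpret P: prob_space M by fact
  note s2 = assms(2)
  define z where "z = (cmod mu)^2"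
  define f where "f = z + s2"
  define V where "V = s2^2 + 2 * s2 * z"
  have z0: "z \<ge> 0" by (simp add: z_def)
  have V0: "V > 0" using s2 z0 by (simp add: V_def add_pos_nonneg)
  have rv[measurable]: "X s \<in> borel_measurable M" for s
    using assms(3) unfolding P.indep_vars_def by blast
  have one: "(\<integral>\<^sup>+z. ennreal (cn_density 0 1 z) \<partial>lborel) = 1"
  proof -
    have "emeasure M (X 0 -` UNIV \<inter> space M) = (\<integral>\<^sup>+x. ennreal (cn_density mu s2 x) * indicator UNIV x \<partial>lborel)"
      by (rule distributed_emeasure[OF assms(4)]) simp
    then have "(\<integral>\<^sup>+x. ennreal (cn_density mu s2 x) \<partial>lborel) = 1"
      by (simp add: P.emeasure_space_1)
    then show ?thesis using cn_density_integral_eq[OF s2, of mu] by simp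
  qed
  have mgf_each: "(\<integral>\<^sup>+\<omega>. ennreal (exp (t * ((cmod (X s \<omega>))^2 - f))) \<partial>M) \<le> ennreal (exp (V * t^2))"
    if t: "\<bar>t * s2\<bar> \<le> 1/2" for s t
  proof -
    have "(\<integral>\<^sup>+\<omega>. ennreal (exp (t * ((cmod (X s \<omega>))^2 - f))) \<partial>M)
        = (\<integral>\<^sup>+x. ennreal (cn_density mu s2 x) * ennreal (exp (t * ((cmod x)^2 - f))) \<partial>lborel)"
      by (rule distributed_nn_integral[OF assms(4), symmetric]) measurable
    also have "\<dots> = ennreal (exp (t * (cmod mu)^2 / (1 - t * s2) - t * f) / (1 - t * s2))"
      by (rule cn_mgf[OF s2 _ one]) (use t in auto)
    also have "\<dots> \<le> ennreal (exp (V * t^2))"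
      using mgf_real_bound[OF s2 z0 t] by (intro ennreal_leI) (simp add: f_def V_def z_def)
    finally show ?thesis .
  qed
  define D where "D \<omega> = (\<Sum>s\<in>{1..n}. (cmod (X s \<omega>))^2 - f)" for \<omega>
  have prod_bound: "(\<integral>\<^sup>+\<omega>. ennreal (exp (t * D \<omega>)) \<partial>M) \<le> ennreal (exp (real n * V * t^2))"
    if t: "\<bar>t * s2\<bar> \<le> 1/2" for t
  proof -
    have "(\<integral>\<^sup>+\<omega>. ennreal (exp (t * D \<omega>)) \<partial>M)
        = (\<integral>\<^sup>+\<omega>. (\<Prod>s\<in>{1..n}. ennreal (exp (t * ((cmod (X s \<omega>))^2 - f)))) \<partial>M)"
      by (intro nn_integral_cong) (simp add: D_def sum_distrib_left exp_sum prod_ennreal)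
    also have "\<dots> = (\<Prod>s\<in>{1..n}. \<integral>\<^sup>+\<omega>. ennreal (exp (t * ((cmod (X s \<omega>))^2 - f))) \<partial>M)"
      by (intro P.indep_vars_nn_integral P.indep_vars_compose2[OF P.indep_vars_subset[OF assms(3)]]) auto
    also have "\<dots> \<le> (\<Prod>s\<in>{1..n}. ennreal (exp (V * t^2)))"
      by (intro prod_mono_ennreal mgf_each t)
    also have "\<dots> = ennreal (exp (real n * V * t^2))"
      by (simp add: mult.assoc exp_of_nat_mult ennreal_power)
    finally show ?thesis .
  qed
  define l where "l = \<delta> / (2 * V)"
  have l0: "l > 0" using assms(6) V0 by (simp add: l_def)
  have ls2: "l * s2 \<le> 1/2"
  proof -
    have "\<delta> * s2 \<le> V" using assms(7) s2 by (simp add: V_def z_def field_simps)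
    then show ?thesis using V0 by (simp add: l_def field_simps)
  qed
  have tail: "measure M {\<omega>\<in>space M. real n * \<delta> \<le> \<sigma> * D \<omega>}
      \<le> exp (- ((real n * \<delta>^2) / (4 * V)))" if \<sigma>: "\<sigma> = 1 \<or> \<sigma> = -1" for \<sigma> :: real
  proof -
    have [measurable]: "D \<in> borel_measurable M" unfolding D_def by measurable
    have "ennreal (measure M {\<omega>\<in>space M. real n * \<delta> \<le> \<sigma> * D \<omega>})
        = emeasure M {\<omega>\<in>space M. real n * \<delta> \<le> \<sigma> * D \<omega>}"
      by (simp add: P.emeasure_eq_measure)
    also have "\<dots> \<le> ennreal (exp (- l * (real n * \<delta>))) *
        (\<integral>\<^sup>+\<omega>. ennreal (exp (l * (\<sigma> * D \<omega>))) * indicator (space M) \<omega> \<partial>M)"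
      by (rule Chernoff_ineq_nn_integral_ge[OF l0]) auto
    also have "(\<integral>\<^sup>+\<omega>. ennreal (exp (l * (\<sigma> * D \<omega>))) * indicator (space M) \<omega> \<partial>M)
        = (\<integral>\<^sup>+\<omega>. ennreal (exp ((l * \<sigma>) * D \<omega>)) \<partial>M)"
      by (intro nn_integral_cong) (simp add: mult.assoc)
    also have "ennreal (exp (- l * (real n * \<delta>))) * \<dots> \<le> ennreal (exp (- l * (real n * \<delta>))) * ennreal (exp (real n * V * (l * \<sigma>)^2))"
    proof (rule mult_left_mono)
      have "\<bar>(l * \<sigma>) * s2\<bar> = l * s2" using \<sigma> l0 s2 by auto
      then show "(\<integral>\<^sup>+\<omega>. ennreal (exp ((l * \<sigma>) * D \<omega>)) \<partial>M) \<le> ennreal (exp (real n * V * (l * \<sigma>)^2))"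
        using ls2 by (intro prod_bound) simp
    qed simp
    also have "ennreal (exp (- l * (real n * \<delta>))) * ennreal (exp (real n * V * (l * \<sigma>)^2))
        = ennreal (exp (- ((real n * \<delta>^2) / (4 * V))))"
    proof -
      have "- l * (real n * \<delta>) + real n * V * (l * \<sigma>)^2 = - ((real n * \<delta>^2) / (4 * V))"
        using \<sigma> V0 by (auto simp: l_def field_simps power2_eq_square)
      then show ?thesis by (simp flip: ennreal_mult exp_add)
    qed
    finally have "ennreal (measure M {\<omega>\<in>space M. real n * \<delta> \<le> \<sigma> * D \<omega>}) \<le> ennreal (exp (- ((real n * \<delta>^2) / (4 * V))))" .
    then show ?thesis by (rule ennreal_le_iff[THEN iffD1, rotated]) simp
  qed
  let ?E = "{\<omega> \<in> space M. \<bar>(\<Sum>s\<in>{1..n}. (cmod (X s \<omega>))^2) / real n - ((cmod mu)^2 + s2)\<bar> > \<delta>}"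
  let ?A = "{\<omega>\<in>space M. real n * \<delta> \<le> 1 * D \<omega>}"
  let ?B = "{\<omega>\<in>space M. real n * \<delta> \<le> -1 * D \<omega>}"
  have sub: "?E \<subseteq> ?A \<union> ?B"
  proof
    fix \<omega> assume "\<omega> \<in> ?E"
    then have w: "\<omega> \<in> space M" and g: "\<bar>(\<Sum>s\<in>{1..n}. (cmod (X s \<omega>))^2) / real n - f\<bar> > \<delta>"
      by (auto simp: f_def z_def)
    have n0: "real n > 0" using assms(5) by simp
    have "D \<omega> = (\<Sum>s\<in>{1..n}. (cmod (X s \<omega>))^2) - real n * f"
      by (simp add: D_def sum_subtractf)
    then have "(\<Sum>s\<in>{1..n}. (cmod (X s \<omega>))^2) / real n - f = D \<omega> / real n"
      using n0 by (simp add: field_simps)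
    with g have "\<bar>D \<omega>\<bar> / real n > \<delta>" using n0 by (simp add: abs_divide)
    then have "\<bar>D \<omega>\<bar> > \<delta> * real n" using n0 by (simp add: less_divide_eq)
    then have "\<bar>D \<omega>\<bar> > real n * \<delta>" by (simp add: mult.commute)
    then show "\<omega> \<in> ?A \<union> ?B" using w by auto
  qed
  have [measurable]: "D \<in> borel_measurable M" unfolding D_def by measurable
  have "measure M ?E \<le> measure M (?A \<union> ?B)"
    by (rule P.finite_measure_mono[OF sub]) measurable
  also have "\<dots> \<le> measure M ?A + measure M ?B"
    by (rule measure_Un_le) measurable
  also have "\<dots> \<le> exp (- ((real n * \<delta>^2) / (4 * V))) + exp (- ((real n * \<delta>^2) / (4 * V)))"
    by (intro add_mono tail) auto
  finally show ?thesis by (simp add: V_def z_def)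
qed

end
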